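(* Let $n\ge 1$, let $G$ be a subgroup of the symmetric group $S_n$ acting on $T=\{1,\ldots,n\}$, and let $\mathcal{B}$ be a block partition for $G$. Then the map $\Psi\mapsto \Psi|_T$ is a group isomorphism from the automorphism group $\mathrm{Aut}(U_{G\looparrowright\mathcal{B}})$ of the ordered set $U_{G\looparrowright\mathcal{B}}$ onto $G$. In particular, every automorphism of $U_{G\looparrowright\mathcal{B}}$ maps $T$ onto $T$, its restriction to $T$ is an element of $G$, every element of $G$ arises as such a restriction, and an automorphism is uniquely determined by its restriction to $T$.
   Context: A block of a permutation group $G$ on $\{1,\ldots,n\}$ is a set $B\subseteq\{1,\ldots,n\}$ such that for all $\Phi\in G$, $\Phi[B]\cap B\neq\emptyset$ implies $\Phi[B]=B$. For $A\subseteq\{1,\ldots,n\}$ write $G\cdot A=\{\sigma[A]:\sigma\in G\}$. Let $O_1,\ldots,O_\ell$ be the orbits of $G$ on $\{1,\ldots,n\}$, and for each $j$ let $B_j\subseteq O_j$ be a (nonempty) block of $G$. The partition $\mathcal{B}=\bigcup_{j=1}^\ell G\cdot B_j$ of $\{1,\ldots,n\}$ is called a block partition with orbit cut $\{B_1,\ldots,B_\ell\}$. For $B\in\mathcal{B}$ let $G|_B=\{\theta|_B:\theta\in G\}$ (restrictions of elements of $G$ to $B$, regarded as functions with domain $B$), and let $M=\bigcup_{B\in\mathcal{B}}G|_B$. For $\mu\in M$ let $D^\mu=\mathrm{dom}(\mu)\times\{\mu\}$. The ordered set $U_{G\looparrowright\mathcal{B}}$ has as underlying set the disjoint union of $F=\{\ell_1,u_1,\ldots,\ell_n,u_n\}$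 (new symbols), $G$ (its elements as abstract points), $\bigcup_{\mu\in M}D^\mu$, and $T=\{1,\ldots,n\}$. Its order is the reflexive–transitive closure of the following strict comparabilities: (1) $\ell_1<u_1>\ell_2<u_2>\cdots>\ell_n<u_n$ (so $F$ is a fence with $2n$ elements); (2) for every $\mu\in M$ and every $j\in\mathrm{dom}(\mu)$: $u_j<(j,\mu)$ and $(j,\mu)<\mu(j)\in T$; (3) for every $\theta\in G$ and every $B\in\mathcal{B}$: $\theta<x$ for all $x\in D^{\theta|_B}$. No other comparabilities hold; in particular $G$, $\bigcup_{\mu\in M}D^\mu$ and $T$ are antichains. *)

theory Defs
  imports "HOL-Algebra.Sym_Groups"
begin

definition is_block :: "nat \<Rightarrow> (nat \<Rightarrow> nat) set \<Rightarrow> nat set \<Rightarrow> bool" where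
  "is_block n G B \<longleftrightarrow> B \<subseteq> {1..n} \<and> (\<forall>\<Phi>\<in>G. \<Phi> ` B \<inter> B \<noteq> {} \<longrightarrow> \<Phi> ` B = B)"

definition orbits :: "nat \<Rightarrow> (nat \<Rightarrow> nat) set \<Rightarrow> nat set set" where
  "orbits n G = {{\<sigma> i | \<sigma>. \<sigma> \<in> G} | i. i \<in> {1..n}}"

definition gset :: "(nat \<Rightarrow> nat) set \<Rightarrow> nat set \<Rightarrow> nat set set" where
  "gset G A = {\<sigma> ` A | \<sigma>. \<sigma> \<in> G}"

definition is_block_partition :: "nat \<Rightarrow> (nat \<Rightarrow> nat) set \<Rightarrow> nat set set \<Rightarrow> bool" where
  "is_block_partition n G \<B> \<longleftrightarrow>
     (\<exists>cut :: nat set \<Rightarrow> nat set.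
        (\<forall>Ob\<in>orbits n G. cut Ob \<subseteq> Ob \<and> cut Ob \<noteq> {} \<and> is_block n G (cut Ob)) \<and>
        \<B> = (\<Union>Ob\<in>orbits n G. gset G (cut Ob)))"

text \<open>Elements of the ordered set U: fence elements l_i, u_i; group elements;
  points (j, mu) of D^mu where mu is a partial map (restriction of some theta to a block);
  elements of T.\<close>
datatype Uel = Lo nat | Up nat | Gr "nat \<Rightarrow> nat" | Dp nat "nat \<rightharpoonup> nat" | Tp nat

definition restr :: "(nat \<Rightarrow> nat) \<Rightarrow> nat set \<Rightarrow> (nat \<rightharpoonup> nat)" where
  "restr \<theta> B = (Some \<circ> \<theta>) |` B"

definition Mset :: "(nat \<Rightarrow> nat) set \<Rightarrow> nat set set \<Rightarrow> (nat \<rightharpoonup> nat) set" where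
  "Mset G \<B> = {restr \<theta> B | \<theta> B. \<theta> \<in> G \<and> B \<in> \<B>}"

definition Ucarrier :: "nat \<Rightarrow> (nat \<Rightarrow> nat) set \<Rightarrow> nat set set \<Rightarrow> Uel set" where
  "Ucarrier n G \<B> =
     Lo ` {1..n} \<union> Up ` {1..n} \<union> Gr ` G \<union>
     {Dp j \<mu> | j \<mu>. \<mu> \<in> Mset G \<B> \<and> j \<in> dom \<mu>} \<union> Tp ` {1..n}"

definition Urel :: "nat \<Rightarrow> (nat \<Rightarrow> nat) set \<Rightarrow> nat set set \<Rightarrow> (Uel \<times> Uel) set" where
  "Urel n G \<B> =
     {(Lo i, Up i) | i. i \<in> {1..n}} \<union>
     {(Lo (Suc i), Up i) | i. i \<in> {1..<n}} \<union>
     {(Up j, Dp j \<mu>) | j \<mu>. \<mu> \<in> Mset G \<B> \<and> j \<in> dom \<mu>} \<union>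
     {(Dp j \<mu>, Tp (the (\<mu> j))) | j \<mu>. \<mu> \<in> Mset G \<B> \<and> j \<in> dom \<mu>} \<union>
     {(Gr \<theta>, Dp j (restr \<theta> B)) | \<theta> B j. \<theta> \<in> G \<and> B \<in> \<B> \<and> j \<in> B}"

definition Uleq :: "nat \<Rightarrow> (nat \<Rightarrow> nat) set \<Rightarrow> nat set set \<Rightarrow> Uel \<Rightarrow> Uel \<Rightarrow> bool" where
  "Uleq n G \<B> x y \<longleftrightarrow> x \<in> Ucarrier n G \<B> \<and> y \<in> Ucarrier n G \<B> \<and> (x, y) \<in> (Urel n G \<B>)\<^sup>*"

definition Aut :: "nat \<Rightarrow> (nat \<Rightarrow> nat) set \<Rightarrow> nat set set \<Rightarrow> (Uel \<Rightarrow> Uel) set" where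
  "Aut n G \<B> = {\<Psi>. bij_betw \<Psi> (Ucarrier n G \<B>) (Ucarrier n G \<B>) \<and>
      (\<forall>x\<in>Ucarrier n G \<B>. \<forall>y\<in>Ucarrier n G \<B>. Uleq n G \<B> x y \<longleftrightarrow> Uleq n G \<B> (\<Psi> x) (\<Psi> y)) \<and>
      (\<forall>x. x \<notin> Ucarrier n G \<B> \<longrightarrow> \<Psi> x = x)}"

definition Aut_group :: "nat \<Rightarrow> (nat \<Rightarrow> nat) set \<Rightarrow> nat set set \<Rightarrow> (Uel \<Rightarrow> Uel) monoid" where
  "Aut_group n G \<B> = \<lparr> carrier = Aut n G \<B>, mult = (\<circ>), one = id \<rparr>"

fun untp :: "Uel \<Rightarrow> nat" where
  "untp (Tp k) = k"
| "untp _ = 0"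

definition resT :: "nat \<Rightarrow> (Uel \<Rightarrow> Uel) \<Rightarrow> (nat \<Rightarrow> nat)" where
  "resT n \<Psi> = (\<lambda>i. if i \<in> {1..n} then untp (\<Psi> (Tp i)) else i)"

end

theory Submission
  imports Defs
begin


lemma BB_mem_gen: "BB = (\<Union>Ob\<in>f ` {1..n}. gset G (C Ob)) \<Longrightarrow>
   B \<in> BB \<longleftrightarrow> (\<exists>i\<in>{1..n::nat}. \<exists>\<sigma>\<in>G. B = \<sigma> ` C (f i))"
  unfolding gset_def by auto

locale UA =
  fixes n :: nat and G :: "(nat \<Rightarrow> nat) set" and BB :: "nat set set"
  assumes n1: "n \<ge> 1" and sg: "subgroup G (sym_group n)" and bp: "is_block_partition n G BB"
begin

lemma permG: "g \<in> G \<Longrightarrow> g permutes {1..n}"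
  using subgroup.subset[OF sg] by (auto simp: sym_group_carrier)

lemma idG: "id \<in> G"
  using subgroup.one_closed[OF sg] by (simp add: sym_group_one)

lemma compG: "g \<in> G \<Longrightarrow> h \<in> G \<Longrightarrow> g \<circ> h \<in> G"
  using subgroup.m_closed[OF sg] by (simp add: sym_group_mult)

lemma invG: assumes "g \<in> G" shows "inv' g \<in> G"
proof -
  have c: "g \<in> carrier (sym_group n)" using assms subgroup.subset[OF sg] by blast
  have "inv\<^bsub>sym_group n\<^esub> g \<in> G" using subgroup.m_inv_closed[OF sg assms] .
  then show ?thesis using sym_group_inv_equality[OF c] by simp
qed

lemma inv_o1: "g \<in> G \<Longrightarrow> inv' g \<circ> g = id"
  by (rule permutes_inv_o(2)[OF permG])
lemma inv_o2: "g \<in> G \<Longrightarrow> g \<circ> inv' g = id"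
  by (rule permutes_inv_o(1)[OF permG])
lemma inv_ap1: assumes "g \<in> G" shows "inv' g (g x) = x"
  using fun_cong[OF inv_o1[OF assms], of x] by simp
lemma inv_ap2: assumes "g \<in> G" shows "g (inv' g x) = x"
  using fun_cong[OF inv_o2[OF assms], of x] by simp
lemma out: "g \<in> G \<Longrightarrow> x \<notin> {1..n} \<Longrightarrow> g x = x"
  by (rule permutes_not_in[OF permG])
lemma inn: "g \<in> G \<Longrightarrow> x \<in> {1..n} \<Longrightarrow> g x \<in> {1..n}"
  using permutes_in_image[OF permG] by blast

definition orb where "orb i = {\<sigma> i | \<sigma>. \<sigma> \<in> G}"

lemma orb_eq: assumes "a \<in> orb i" shows "orb a = orb i"
proof -
  obtain \<tau> where t: "\<tau> \<in> G" "a = \<tau> i" using assms unfolding orb_def by blast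
  show ?thesis
  proof
    show "orb a \<subseteq> orb i" unfolding orb_def
    proof safe
      fix \<sigma> assume "\<sigma> \<in> G"
      then have "(\<sigma> \<circ> \<tau>) i = \<sigma> a" "\<sigma> \<circ> \<tau> \<in> G" using t compG by auto
      then show "\<exists>\<sigma>'. \<sigma> a = \<sigma>' i \<and> \<sigma>' \<in> G" by metis
    qed
    show "orb i \<subseteq> orb a" unfolding orb_def
    proof safe
      fix \<sigma> assume "\<sigma> \<in> G"
      then have "(\<sigma> \<circ> inv' \<tau>) a = \<sigma> i" "\<sigma> \<circ> inv' \<tau> \<in> G"
        using t inv_ap1 compG invG by auto
      then show "\<exists>\<sigma>'. \<sigma> i = \<sigma>' a \<and> \<sigma>' \<in> G" by metis
    qed
  qed
qed

lemma orb_self: "i \<in> orb i"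
  unfolding orb_def mem_Collect_eq using idG by (metis id_apply)

lemma orbits_orb: "orbits n G = orb ` {1..n}"
  unfolding orbits_def orb_def by blast


definition cutf where "cutf = (SOME cut :: nat set \<Rightarrow> nat set.
        (\<forall>Ob\<in>orbits n G. cut Ob \<subseteq> Ob \<and> cut Ob \<noteq> {} \<and> is_block n G (cut Ob)) \<and>
        BB = (\<Union>Ob\<in>orbits n G. gset G (cut Ob)))"

lemma cutf_props: "(\<forall>Ob\<in>orbits n G. cutf Ob \<subseteq> Ob \<and> cutf Ob \<noteq> {} \<and> is_block n G (cutf Ob)) \<and>
        BB = (\<Union>Ob\<in>orbits n G. gset G (cutf Ob))"
  using bp unfolding is_block_partition_def cutf_def by (rule someI_ex)

lemma cut_i: assumes "i \<in> {1..n}"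
  shows "cutf (orb i) \<subseteq> orb i" "cutf (orb i) \<noteq> {}" "is_block n G (cutf (orb i))"
proof -
  have "orb i \<in> orbits n G" using assms unfolding orbits_orb by (rule imageI)
  then have "cutf (orb i) \<subseteq> orb i \<and> cutf (orb i) \<noteq> {} \<and> is_block n G (cutf (orb i))"
    using conjunct1[OF cutf_props] by (rule bspec[rotated])
  then show "cutf (orb i) \<subseteq> orb i" "cutf (orb i) \<noteq> {}" "is_block n G (cutf (orb i))" by simp_all
qed

lemma BB_mem: "B \<in> BB \<longleftrightarrow> (\<exists>i\<in>{1..n}. \<exists>\<sigma>\<in>G. B = \<sigma> ` cutf (orb i))"
  using BB_mem_gen[OF conjunct2[OF cutf_props[unfolded orbits_orb]]] .

lemma BB_sub: assumes "B \<in> BB" shows "B \<subseteq> {1..n}"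
proof -
  obtain i \<sigma> where i: "i \<in> {1..n}" "\<sigma> \<in> G" "B = \<sigma> ` cutf (orb i)" using assms BB_mem by blast
  have "cutf (orb i) \<subseteq> {1..n}" using cut_i(3)[OF i(1)] unfolding is_block_def by blast
  then show ?thesis using i inn by blast
qed

lemma BB_cover: assumes "j \<in> {1..n}" shows "\<exists>B\<in>BB. j \<in> B"
proof -
  obtain c where c: "c \<in> cutf (orb j)" using cut_i(2)[OF assms] by blast
  then have "c \<in> orb j" using cut_i(1)[OF assms] by blast
  then obtain \<sigma> where s: "\<sigma> \<in> G" "c = \<sigma> j" unfolding orb_def by blast
  have "inv' \<sigma> ` cutf (orb j) \<in> BB" using BB_mem assms invG[OF s(1)] by blast
  moreover have "j \<in> inv' \<sigma> ` cutf (orb j)" using c s inv_ap1[OF s(1), of j] by (metis imageI)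
  ultimately show ?thesis by blast
qed

lemma BB_disj: assumes "B1 \<in> BB" "B2 \<in> BB" "x \<in> B1" "x \<in> B2" shows "B1 = B2"
proof -
  obtain i1 \<sigma>1 where i1: "i1 \<in> {1..n}" "\<sigma>1 \<in> G" "B1 = \<sigma>1 ` cutf (orb i1)" using assms BB_mem by blast
  obtain i2 \<sigma>2 where i2: "i2 \<in> {1..n}" "\<sigma>2 \<in> G" "B2 = \<sigma>2 ` cutf (orb i2)" using assms BB_mem by blast
  obtain c1 where c1: "c1 \<in> cutf (orb i1)" "x = \<sigma>1 c1" using assms i1 by blast
  obtain c2 where c2: "c2 \<in> cutf (orb i2)" "x = \<sigma>2 c2" using assms i2 by blast
  have o1: "orb c1 = orb i1" using orb_eq c1 cut_i(1)[OF i1(1)] by blast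
  have o2: "orb c2 = orb i2" using orb_eq c2 cut_i(1)[OF i2(1)] by blast
  define \<tau> where "\<tau> = inv' \<sigma>2 \<circ> \<sigma>1"
  have tG: "\<tau> \<in> G" unfolding \<tau>_def using compG invG i1 i2 by blast
  have "\<sigma>1 c1 = \<sigma>2 c2" using c1 c2 by simp
  then have tc: "\<tau> c1 = c2" unfolding \<tau>_def using inv_ap1[OF i2(2), of c2] by simp
  have "c2 \<in> orb c1" unfolding orb_def using tG tc by blast
  then have "orb c2 = orb c1" by (rule orb_eq)
  then have oo: "orb i1 = orb i2" using o1 o2 by simp
  define C where "C = cutf (orb i1)"
  have blk: "is_block n G C" unfolding C_def using cut_i(3)[OF i1(1)] .
  have "c2 \<in> \<tau> ` C" using tc c1(1) unfolding C_def by blast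
  moreover have "c2 \<in> C" using c2(1) oo unfolding C_def by simp
  ultimately have "c2 \<in> \<tau> ` C \<inter> C" by blast
  then have tC: "\<tau> ` C = C" using blk tG unfolding is_block_def by blast
  have "\<sigma>2 ` C = \<sigma>2 ` (\<tau> ` C)" using tC by simp
  also have "\<dots> = (\<sigma>2 \<circ> inv' \<sigma>2 \<circ> \<sigma>1) ` C" unfolding \<tau>_def by (simp add: image_comp comp_assoc)
  also have "\<dots> = \<sigma>1 ` C" using inv_o2[OF i2(2)] by simp
  finally show ?thesis using i1 i2 oo unfolding C_def by simp
qed


abbreviation "U \<equiv> Ucarrier n G BB"
abbreviation "R \<equiv> Urel n G BB"
abbreviation "lq \<equiv> Uleq n G BB"

lemma dom_restr[simp]: "dom (restr \<theta> B) = B"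
  unfolding restr_def by auto
lemma restr_Some[simp]: "restr \<theta> B j = Some y \<longleftrightarrow> j \<in> B \<and> y = \<theta> j"
  unfolding restr_def restrict_map_def by auto
lemma restr_app[simp]: "j \<in> B \<Longrightarrow> restr \<theta> B j = Some (\<theta> j)"
  unfolding restr_def by auto

lemma Mset_iff: "\<mu> \<in> Mset G BB \<longleftrightarrow> (\<exists>\<theta> B. \<theta> \<in> G \<and> B \<in> BB \<and> \<mu> = restr \<theta> B)"
  unfolding Mset_def by auto

lemma U_Lo[simp]: "Lo i \<in> U \<longleftrightarrow> i \<in> {1..n}" unfolding Ucarrier_def by auto
lemma U_Up[simp]: "Up i \<in> U \<longleftrightarrow> i \<in> {1..n}" unfolding Ucarrier_def by auto
lemma U_Tp[simp]: "Tp i \<in> U \<longleftrightarrow> i \<in> {1..n}" unfolding Ucarrier_def by auto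
lemma U_Gr[simp]: "Gr \<theta> \<in> U \<longleftrightarrow> \<theta> \<in> G" unfolding Ucarrier_def by auto
lemma U_Dp0: "Dp j \<mu> \<in> U \<longleftrightarrow> \<mu> \<in> Mset G BB \<and> j \<in> dom \<mu>"
  unfolding Ucarrier_def by auto
lemma U_Dp: "Dp j \<mu> \<in> U \<longleftrightarrow> (\<exists>\<theta> B. \<theta> \<in> G \<and> B \<in> BB \<and> \<mu> = restr \<theta> B \<and> j \<in> B)"
  unfolding U_Dp0 Mset_iff by force

lemma U_Dp_I: "\<theta> \<in> G \<Longrightarrow> B \<in> BB \<Longrightarrow> j \<in> B \<Longrightarrow> Dp j (restr \<theta> B) \<in> U"
  using U_Dp by blast

lemma R_Lo[simp]: "(z, Lo i) \<notin> R" unfolding Urel_def by auto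
lemma R_Gr[simp]: "(z, Gr \<theta>) \<notin> R" unfolding Urel_def by auto
lemma R_Tp[simp]: "(Tp k, z) \<notin> R" unfolding Urel_def by auto
lemma R_Up: "(z, Up i) \<in> R \<Longrightarrow> \<exists>i'. z = Lo i'" unfolding Urel_def by auto
lemma R_Dp: "(z, Dp j \<mu>) \<in> R \<Longrightarrow> z = Up j \<or> (\<exists>\<theta> B. z = Gr \<theta> \<and> \<theta> \<in> G \<and> B \<in> BB \<and> j \<in> B \<and> \<mu> = restr \<theta> B)"
  unfolding Urel_def by auto
lemma R_to_Tp: "(z, Tp k) \<in> R \<Longrightarrow> \<exists>j \<mu>. z = Dp j \<mu> \<and> k = the (\<mu> j)"
  unfolding Urel_def by auto
lemma R_Lo_Up: "(Lo i, Up j) \<in> R \<longleftrightarrow> (i = j \<and> j \<in> {1..n}) \<or> (i = Suc j \<and> j \<in> {1..<n})"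
  unfolding Urel_def by auto

lemma R_sub_aux: "\<mu> \<in> Mset G BB \<Longrightarrow> j \<in> dom \<mu> \<Longrightarrow> j \<in> {1..n}"
  unfolding Mset_iff using BB_sub by force

lemma R_sub: assumes "(x, y) \<in> R" shows "x \<in> U" "y \<in> U"
proof -
  have "x \<in> U \<and> y \<in> U"
    using assms unfolding Urel_def
  proof (elim UnE CollectE exE conjE)
    fix i assume "(x, y) = (Lo (Suc i), Up i)" "i \<in> {1..<n}"
    then show ?thesis by auto
  next
    fix j \<mu> assume "(x, y) = (Up j, Dp j \<mu>)" "\<mu> \<in> Mset G BB" "j \<in> dom \<mu>"
    then show ?thesis using BB_sub U_Dp0 R_sub_aux by (fastforce simp: Mset_iff)
  next
    fix j \<mu> assume a: "(x, y) = (Dp j \<mu>, Tp (the (\<mu> j)))" "\<mu> \<in> Mset G BB" "j \<in> dom \<mu>"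
    then obtain \<theta> B where t: "\<theta> \<in> G" "B \<in> BB" "\<mu> = restr \<theta> B" "j \<in> B" unfolding Mset_iff by auto
    then have "\<theta> j \<in> {1..n}" using BB_sub inn by blast
    then show ?thesis using a t by (auto simp: U_Dp)
  next
    fix \<theta> B j assume "(x, y) = (Gr \<theta>, Dp j (restr \<theta> B))" "\<theta> \<in> G" "B \<in> BB" "j \<in> B"
    then show ?thesis using BB_sub U_Dp_I by force
  qed auto
  then show "x \<in> U" "y \<in> U" by auto
qed

lemma S_Lo: "(z, Lo i) \<in> R\<^sup>* \<Longrightarrow> z = Lo i"
  by (erule rtranclE) auto
lemma S_Gr: "(z, Gr \<theta>) \<in> R\<^sup>* \<Longrightarrow> z = Gr \<theta>"
  by (erule rtranclE) auto
lemma S_Tp: "(Tp k, z) \<in> R\<^sup>* \<Longrightarrow> z = Tp k"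
  by (erule converse_rtranclE) auto
lemma S_Up: "(z, Up i) \<in> R\<^sup>* \<Longrightarrow> z = Up i \<or> (z, Up i) \<in> R"
proof (erule rtranclE)
  fix w assume "(z, w) \<in> R\<^sup>*" "(w, Up i) \<in> R"
  then show ?thesis using R_Up S_Lo by blast
qed simp
lemma S_Dp: "(z, Dp j \<mu>) \<in> R\<^sup>* \<Longrightarrow> z = Dp j \<mu> \<or> z = Up j \<or> (z, Up j) \<in> R \<or>
   (\<exists>\<theta> B. z = Gr \<theta> \<and> \<theta> \<in> G \<and> B \<in> BB \<and> j \<in> B \<and> \<mu> = restr \<theta> B)"
proof (erule rtranclE)
  fix w assume a: "(z, w) \<in> R\<^sup>*" "(w, Dp j \<mu>) \<in> R"
  from R_Dp[OF a(2)] show ?thesis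
  proof
    assume "w = Up j" then show ?thesis using S_Up a(1) by blast
  next
    assume "\<exists>\<theta> B. w = Gr \<theta> \<and> \<theta> \<in> G \<and> B \<in> BB \<and> j \<in> B \<and> \<mu> = restr \<theta> B"
    then show ?thesis using S_Gr a(1) by blast
  qed
qed simp
lemma S_Tp': "(z, Tp k) \<in> R\<^sup>* \<Longrightarrow> z = Tp k \<or> (\<exists>j \<mu>. (z, Dp j \<mu>) \<in> R\<^sup>* \<and> k = the (\<mu> j))"
proof (erule rtranclE)
  fix w assume a: "(z, w) \<in> R\<^sup>*" "(w, Tp k) \<in> R"
  then show ?thesis using R_to_Tp[OF a(2)] by blast
qed simp

lemma F_Up_Dp: "(Up i, Dp j \<mu>) \<in> R\<^sup>* \<Longrightarrow> i = j"
  using S_Dp[of "Up i" j \<mu>] R_Up by blast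
lemma F_Gr_Dp: "(Gr \<theta>, Dp j \<mu>) \<in> R\<^sup>* \<Longrightarrow> \<exists>B. B \<in> BB \<and> j \<in> B \<and> \<mu> = restr \<theta> B"
  using S_Dp[of "Gr \<theta>" j \<mu>] R_Up by blast
lemma F_Dp_Tp: "(Dp j \<mu>, Tp k) \<in> R\<^sup>* \<Longrightarrow> k = the (\<mu> j)"
proof -
  assume "(Dp j \<mu>, Tp k) \<in> R\<^sup>*"
  then obtain j' \<mu>' where "(Dp j \<mu>, Dp j' \<mu>') \<in> R\<^sup>*" "k = the (\<mu>' j')" using S_Tp' by blast
  then show ?thesis using S_Dp[of "Dp j \<mu>" j' \<mu>'] R_Up by blast
qed
lemma F_Lo_Up: "(Lo i, Up j) \<in> R\<^sup>* \<Longrightarrow> (Lo i, Up j) \<in> R"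
  using S_Up by blast
lemma F_Gr_Up: "(Gr \<theta>, Up j) \<notin> R\<^sup>*"
  using S_Up R_Up by blast

end

context UA begin

lemma R_LoUp: "i \<in> {1..n} \<Longrightarrow> (Lo i, Up i) \<in> R" by (simp add: R_Lo_Up)
lemma R_UpDp: "\<theta> \<in> G \<Longrightarrow> B \<in> BB \<Longrightarrow> j \<in> B \<Longrightarrow> (Up j, Dp j (restr \<theta> B)) \<in> R"
proof -
  assume a: "\<theta> \<in> G" "B \<in> BB" "j \<in> B"
  then have "restr \<theta> B \<in> Mset G BB" "j \<in> dom (restr \<theta> B)" unfolding Mset_iff by auto
  then show ?thesis unfolding Urel_def by blast
qed
lemma R_DpTp: "\<theta> \<in> G \<Longrightarrow> B \<in> BB \<Longrightarrow> j \<in> B \<Longrightarrow> (Dp j (restr \<theta> B), Tp (\<theta> j)) \<in> R"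
proof -
  assume a: "\<theta> \<in> G" "B \<in> BB" "j \<in> B"
  then have "restr \<theta> B \<in> Mset G BB" "j \<in> dom (restr \<theta> B)" unfolding Mset_iff by auto
  moreover have "the (restr \<theta> B j) = \<theta> j" using a by simp
  ultimately show ?thesis unfolding Urel_def by (smt (verit) UnI1 UnI2 mem_Collect_eq)
qed
lemma R_GrDp: "\<theta> \<in> G \<Longrightarrow> B \<in> BB \<Longrightarrow> j \<in> B \<Longrightarrow> (Gr \<theta>, Dp j (restr \<theta> B)) \<in> R"
  unfolding Urel_def by blast

lemma lq_def': "lq x y \<longleftrightarrow> x \<in> U \<and> y \<in> U \<and> (x, y) \<in> R\<^sup>*"
  unfolding Uleq_def ..
lemma lq_R: "(x, y) \<in> R \<Longrightarrow> lq x y"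
  unfolding lq_def' using R_sub by blast

definition "TS = Tp ` {1..n}"
definition "LS = Lo ` {1..n}"
definition "US = Up ` {1..n}"
definition "GS = Gr ` G"
definition "DS = {x \<in> U. \<exists>j \<mu>. x = Dp j \<mu>}"
definition "BS = LS \<union> GS"

lemma U_cases: "x \<in> U \<Longrightarrow> x \<in> TS \<or> x \<in> LS \<or> x \<in> US \<or> x \<in> GS \<or> x \<in> DS"
  by (cases x) (auto simp: TS_def LS_def US_def GS_def DS_def)

lemma top_char: assumes "x \<in> U" shows "(\<forall>y\<in>U. lq x y \<longrightarrow> y = x) \<longleftrightarrow> x \<in> TS"
proof
  assume "x \<in> TS" then show "\<forall>y\<in>U. lq x y \<longrightarrow> y = x"
    unfolding TS_def lq_def' using S_Tp by blast
next
  assume all: "\<forall>y\<in>U. lq x y \<longrightarrow> y = x"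
  show "x \<in> TS"
  proof (cases x)
    case (Lo i)
    then have "lq x (Up i)" using assms R_LoUp lq_R by auto
    then show ?thesis using all lq_def' Lo by auto
  next
    case (Up i)
    then obtain B where B: "B \<in> BB" "i \<in> B" using assms BB_cover by auto
    then have "lq x (Dp i (restr id B))" using Up R_UpDp idG lq_R by blast
    then show ?thesis using all lq_def' Up by auto
  next
    case (Gr \<theta>)
    obtain B where B: "B \<in> BB" "1 \<in> B" using n1 BB_cover by auto
    then have "lq x (Dp 1 (restr \<theta> B))" using Gr assms R_GrDp lq_R by auto
    then show ?thesis using all lq_def' Gr by auto
  next
    case (Dp j \<mu>)
    then obtain \<theta> B where t: "\<theta> \<in> G" "B \<in> BB" "\<mu> = restr \<theta> B" "j \<in> B" using assms U_Dp by auto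
    then have "lq x (Tp (\<theta> j))" using Dp R_DpTp lq_R by blast
    then show ?thesis using all lq_def' Dp by auto
  next
    case (Tp k) then show ?thesis using assms TS_def by auto
  qed
qed

lemma bot_char: assumes "x \<in> U" shows "(\<forall>y\<in>U. lq y x \<longrightarrow> y = x) \<longleftrightarrow> x \<in> BS"
proof
  assume "x \<in> BS" then show "\<forall>y\<in>U. lq y x \<longrightarrow> y = x"
    unfolding BS_def LS_def GS_def lq_def' using S_Lo S_Gr by blast
next
  assume all: "\<forall>y\<in>U. lq y x \<longrightarrow> y = x"
  show "x \<in> BS"
  proof (cases x)
    case (Lo i) then show ?thesis using assms BS_def LS_def by auto
  next
    case (Up i)
    then have "lq (Lo i) x" using assms R_LoUp lq_R by auto
    then show ?thesis using all lq_def' Up by auto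
  next
    case (Gr \<theta>) then show ?thesis using assms BS_def GS_def by auto
  next
    case (Dp j \<mu>)
    then obtain \<theta> B where t: "\<theta> \<in> G" "B \<in> BB" "\<mu> = restr \<theta> B" "j \<in> B" using assms U_Dp by auto
    then have "lq (Up j) x" using Dp R_UpDp lq_R by blast
    then show ?thesis using all lq_def' Dp by auto
  next
    case (Tp k)
    then obtain B where B: "B \<in> BB" "k \<in> B" using assms BB_cover by auto
    then have "lq (Dp k (restr id B)) (Tp (id k))" using R_DpTp idG lq_R by blast
    then show ?thesis using all lq_def' Tp by auto
  qed
qed

lemma up_char: assumes "x \<in> U" "x \<notin> BS" "x \<notin> TS"
  shows "(\<forall>y\<in>U. lq y x \<longrightarrow> y = x \<or> y \<in> BS) \<longleftrightarrow> x \<in> US"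
proof
  assume "x \<in> US"
  then obtain i where i: "x = Up i" "i \<in> {1..n}" unfolding US_def by auto
  show "\<forall>y\<in>U. lq y x \<longrightarrow> y = x \<or> y \<in> BS"
  proof (intro ballI impI)
    fix y assume y: "y \<in> U" "lq y x"
    then have "y = x \<or> (y, Up i) \<in> R" using S_Up i lq_def' by blast
    then show "y = x \<or> y \<in> BS"
    proof
      assume "(y, Up i) \<in> R"
      then obtain i' where "y = Lo i'" using R_Up by blast
      then show ?thesis using y(1) by (auto simp: BS_def LS_def)
    qed simp
  qed
next
  assume all: "\<forall>y\<in>U. lq y x \<longrightarrow> y = x \<or> y \<in> BS"
  show "x \<in> US"
  proof (cases "x \<in> DS")
    case True
    then obtain j \<mu> where D: "x = Dp j \<mu>" unfolding DS_def by auto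
    then obtain \<theta> B where t: "\<theta> \<in> G" "B \<in> BB" "\<mu> = restr \<theta> B" "j \<in> B" using assms U_Dp by auto
    then have "lq (Up j) x" using D R_UpDp lq_R by blast
    then have False using all lq_def' D unfolding BS_def LS_def GS_def by auto
    then show ?thesis ..
  next
    case False
    then show ?thesis using U_cases[OF assms(1)] assms unfolding BS_def by auto
  qed
qed

lemma lo_char: assumes "x \<in> BS" shows "(\<exists>y\<in>U. y \<in> US \<and> lq x y) \<longleftrightarrow> x \<in> LS"
proof
  assume "x \<in> LS"
  then obtain i where "x = Lo i" "i \<in> {1..n}" unfolding LS_def by auto
  then show "\<exists>y\<in>U. y \<in> US \<and> lq x y" using R_LoUp lq_R unfolding US_def by force
next
  assume "\<exists>y\<in>U. y \<in> US \<and> lq x y"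
  then obtain j where "lq x (Up j)" unfolding US_def by auto
  then show "x \<in> LS" using assms F_Gr_Up lq_def' unfolding BS_def GS_def by auto
qed


lemma lq_Lo_Up: "i \<in> {1..n} \<Longrightarrow> j \<in> {1..n} \<Longrightarrow> lq (Lo i) (Up j) \<longleftrightarrow> (i = j \<or> i = Suc j)"
  unfolding lq_def' using F_Lo_Up R_Lo_Up by auto

context fixes \<Psi> assumes aut: "\<Psi> \<in> Aut n G BB"
begin

lemma aut_bij: "bij_betw \<Psi> U U" using aut unfolding Aut_def by blast
lemma aut_U: "x \<in> U \<Longrightarrow> \<Psi> x \<in> U" using aut_bij bij_betwE by blast
lemma aut_img: "\<Psi> ` U = U" using aut_bij bij_betw_imp_surj_on by blast
lemma aut_inj: "x \<in> U \<Longrightarrow> y \<in> U \<Longrightarrow> \<Psi> x = \<Psi> y \<longleftrightarrow> x = y"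
  using aut_bij unfolding bij_betw_def inj_on_def by blast
lemma aut_lq: "x \<in> U \<Longrightarrow> y \<in> U \<Longrightarrow> lq (\<Psi> x) (\<Psi> y) \<longleftrightarrow> lq x y"
  using aut unfolding Aut_def by blast
lemma aut_out: "x \<notin> U \<Longrightarrow> \<Psi> x = x"
  using aut unfolding Aut_def by blast
lemma preim: "y \<in> U \<Longrightarrow> \<exists>z\<in>U. y = \<Psi> z"
  using aut_img by (metis imageE)
lemma ball_tr: "(\<forall>y\<in>U. P (\<Psi> y)) \<longleftrightarrow> (\<forall>y\<in>U. P y)"
proof
  assume a: "\<forall>y\<in>U. P (\<Psi> y)"
  show "\<forall>y\<in>U. P y"
  proof
    fix y assume "y \<in> U"
    then obtain z where "z \<in> U" "y = \<Psi> z" using preim by blast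
    then show "P y" using a by simp
  qed
next
  assume "\<forall>y\<in>U. P y" then show "\<forall>y\<in>U. P (\<Psi> y)" using aut_U by blast
qed
lemma bex_tr: "(\<exists>y\<in>U. P (\<Psi> y)) \<longleftrightarrow> (\<exists>y\<in>U. P y)"
  using ball_tr[of "\<lambda>y. \<not> P y"] by blast

lemma P_T: assumes "x \<in> U" shows "\<Psi> x \<in> TS \<longleftrightarrow> x \<in> TS"
proof -
  have "\<Psi> x \<in> TS \<longleftrightarrow> (\<forall>y\<in>U. lq (\<Psi> x) y \<longrightarrow> y = \<Psi> x)" using top_char aut_U assms by simp
  also have "\<dots> \<longleftrightarrow> (\<forall>y\<in>U. lq (\<Psi> x) (\<Psi> y) \<longrightarrow> \<Psi> y = \<Psi> x)"
    using ball_tr[of "\<lambda>y. lq (\<Psi> x) y \<longrightarrow> y = \<Psi> x"] by simp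
  also have "\<dots> \<longleftrightarrow> (\<forall>y\<in>U. lq x y \<longrightarrow> y = x)" using assms aut_lq aut_inj by auto
  also have "\<dots> \<longleftrightarrow> x \<in> TS" using top_char assms by simp
  finally show ?thesis .
qed

lemma P_B: assumes "x \<in> U" shows "\<Psi> x \<in> BS \<longleftrightarrow> x \<in> BS"
proof -
  have "\<Psi> x \<in> BS \<longleftrightarrow> (\<forall>y\<in>U. lq y (\<Psi> x) \<longrightarrow> y = \<Psi> x)" using bot_char aut_U assms by simp
  also have "\<dots> \<longleftrightarrow> (\<forall>y\<in>U. lq (\<Psi> y) (\<Psi> x) \<longrightarrow> \<Psi> y = \<Psi> x)"
    using ball_tr[of "\<lambda>y. lq y (\<Psi> x) \<longrightarrow> y = \<Psi> x"] by simp
  also have "\<dots> \<longleftrightarrow> (\<forall>y\<in>U. lq y x \<longrightarrow> y = x)" using assms aut_lq aut_inj by auto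
  also have "\<dots> \<longleftrightarrow> x \<in> BS" using bot_char assms by simp
  finally show ?thesis .
qed

lemma P_U: assumes "x \<in> U" shows "\<Psi> x \<in> US \<longleftrightarrow> x \<in> US"
proof (cases "x \<in> BS \<or> x \<in> TS")
  case True
  then have "\<Psi> x \<in> BS \<or> \<Psi> x \<in> TS" using P_B P_T assms by blast
  then show ?thesis using True unfolding BS_def TS_def US_def LS_def GS_def by auto
next
  case False
  then have F2: "\<Psi> x \<notin> BS" "\<Psi> x \<notin> TS" using P_B P_T assms by auto
  have "\<Psi> x \<in> US \<longleftrightarrow> (\<forall>y\<in>U. lq y (\<Psi> x) \<longrightarrow> y = \<Psi> x \<or> y \<in> BS)"
    using up_char aut_U assms F2 by simp
  also have "\<dots> \<longleftrightarrow> (\<forall>y\<in>U. lq (\<Psi> y) (\<Psi> x) \<longrightarrow> \<Psi> y = \<Psi> x \<or> \<Psi> y \<in> BS)"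
    using ball_tr[of "\<lambda>y. lq y (\<Psi> x) \<longrightarrow> y = \<Psi> x \<or> y \<in> BS"] by simp
  also have "\<dots> \<longleftrightarrow> (\<forall>y\<in>U. lq y x \<longrightarrow> y = x \<or> y \<in> BS)" using assms aut_lq aut_inj P_B by auto
  also have "\<dots> \<longleftrightarrow> x \<in> US" using up_char assms False by simp
  finally show ?thesis .
qed

lemma P_L: assumes "x \<in> U" shows "\<Psi> x \<in> LS \<longleftrightarrow> x \<in> LS"
proof (cases "x \<in> BS")
  case False
  then have "\<Psi> x \<notin> BS" using P_B assms by blast
  then show ?thesis using False unfolding BS_def by auto
next
  case True
  then have F2: "\<Psi> x \<in> BS" using P_B assms by blast
  have "\<Psi> x \<in> LS \<longleftrightarrow> (\<exists>y\<in>U. y \<in> US \<and> lq (\<Psi> x) y)" using lo_char F2 by simp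
  also have "\<dots> \<longleftrightarrow> (\<exists>y\<in>U. \<Psi> y \<in> US \<and> lq (\<Psi> x) (\<Psi> y))"
    using bex_tr[of "\<lambda>y. y \<in> US \<and> lq (\<Psi> x) y"] by simp
  also have "\<dots> \<longleftrightarrow> (\<exists>y\<in>U. y \<in> US \<and> lq x y)" using assms aut_lq P_U by auto
  also have "\<dots> \<longleftrightarrow> x \<in> LS" using lo_char True by simp
  finally show ?thesis .
qed

lemma P_G: assumes "x \<in> U" shows "\<Psi> x \<in> GS \<longleftrightarrow> x \<in> GS"
proof -
  have d: "\<And>z. z \<in> GS \<longleftrightarrow> z \<in> BS \<and> z \<notin> LS" unfolding BS_def GS_def LS_def by auto
  show ?thesis unfolding d using P_B P_L assms by simp
qed

lemma P_D: assumes "x \<in> U" shows "\<Psi> x \<in> DS \<longleftrightarrow> x \<in> DS"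
proof -
  have d: "\<And>z. z \<in> U \<Longrightarrow> z \<in> DS \<longleftrightarrow> z \<notin> TS \<and> z \<notin> LS \<and> z \<notin> US \<and> z \<notin> GS"
    subgoal for z using U_cases[of z] unfolding DS_def TS_def LS_def US_def GS_def by auto
    done
  show ?thesis using d[OF assms] d[OF aut_U[OF assms]] P_T P_L P_U P_G assms by simp
qed


lemma img_Lo: "i \<in> {1..n} \<Longrightarrow> \<exists>k\<in>{1..n}. \<Psi> (Lo i) = Lo k"
  using P_L[of "Lo i"] unfolding LS_def by auto
lemma img_Up: "i \<in> {1..n} \<Longrightarrow> \<exists>k\<in>{1..n}. \<Psi> (Up i) = Up k"
  using P_U[of "Up i"] unfolding US_def by auto
lemma img_Gr: "\<theta> \<in> G \<Longrightarrow> \<exists>\<theta>'\<in>G. \<Psi> (Gr \<theta>) = Gr \<theta>'"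
  using P_G[of "Gr \<theta>"] unfolding GS_def by auto
lemma img_Tp: "k \<in> {1..n} \<Longrightarrow> \<Psi> (Tp k) = Tp (resT n \<Psi> k) \<and> resT n \<Psi> k \<in> {1..n}"
  using P_T[of "Tp k"] unfolding TS_def resT_def by auto

lemma fence_base: "\<Psi> (Lo 1) = Lo 1"
proof -
  have l1: "1 \<in> {1..n}" using n1 by simp
  obtain k where k: "k \<in> {1..n}" "\<Psi> (Lo 1) = Lo k" using img_Lo[OF l1] by blast
  show ?thesis
  proof (rule ccontr)
    assume "\<Psi> (Lo 1) \<noteq> Lo 1"
    then have k2: "k \<ge> 2" using k by auto
    have "Up k \<in> U" "Up (k - 1) \<in> U" using k k2 by auto
    then obtain a b where ab: "a \<in> U" "Up k = \<Psi> a" "b \<in> U" "Up (k - 1) = \<Psi> b" using preim by metis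
    have ea: "\<Psi> a = Up k" "\<Psi> b = Up (k - 1)" using ab by simp_all
    have "k - 1 \<in> {1..n}" using k k2 by auto
    then have "\<Psi> a \<in> US" "\<Psi> b \<in> US" using ea k unfolding US_def by blast+
    then have "a \<in> US" "b \<in> US" using P_U ab by auto
    then obtain a' b' where a': "a = Up a'" "a' \<in> {1..n}" and b': "b = Up b'" "b' \<in> {1..n}"
      unfolding US_def by auto
    have "lq (\<Psi> (Lo 1)) (\<Psi> a)" using ea k lq_Lo_Up by auto
    then have "lq (Lo 1) (Up a')" using aut_lq[of "Lo 1" a] ab l1 a' by simp
    then have "a' = 1" using lq_Lo_Up l1 a' by auto
    have "k = Suc (k - 1)" using k2 by simp
    then have "lq (Lo k) (Up (k - 1))" using lq_Lo_Up[of k "k - 1"] k \<open>k - 1 \<in> {1..n}\<close> by metis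
    then have "lq (\<Psi> (Lo 1)) (\<Psi> b)" using ea k by simp
    then have "lq (Lo 1) (Up b')" using aut_lq[of "Lo 1" b] ab l1 b' by simp
    then have "b' = 1" using lq_Lo_Up l1 b' by auto
    then have "\<Psi> a = \<Psi> b" using \<open>a' = 1\<close> a' b' by simp
    then show False using ea k2 by simp
  qed
qed

lemma lo_step: assumes "Suc (Suc m) \<le> n" "\<Psi> (Lo (Suc m)) = Lo (Suc m)" "\<Psi> (Up (Suc m)) = Up (Suc m)"
  shows "\<Psi> (Lo (Suc (Suc m))) = Lo (Suc (Suc m))"
proof -
  have i: "Suc (Suc m) \<in> {1..n}" "Suc m \<in> {1..n}" using assms by auto
  obtain k where k: "k \<in> {1..n}" "\<Psi> (Lo (Suc (Suc m))) = Lo k" using img_Lo[OF i(1)] by blast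
  have "lq (Lo (Suc (Suc m))) (Up (Suc m))" using lq_Lo_Up i by simp
  then have "lq (Lo k) (Up (Suc m))" using aut_lq[of "Lo (Suc (Suc m))" "Up (Suc m)"] i k assms by simp
  then have "k = Suc m \<or> k = Suc (Suc m)" using lq_Lo_Up k i by auto
  moreover have "k \<noteq> Suc m"
  proof
    assume "k = Suc m"
    then have "\<Psi> (Lo (Suc (Suc m))) = \<Psi> (Lo (Suc m))" using k assms by simp
    then show False using aut_inj i by simp
  qed
  ultimately show ?thesis using k by simp
qed

lemma up_step: assumes "i \<in> {1..n}" "\<Psi> (Lo i) = Lo i" "i \<ge> 2 \<Longrightarrow> \<Psi> (Up (i - 1)) = Up (i - 1)"
  shows "\<Psi> (Up i) = Up i"
proof -
  obtain k where k: "k \<in> {1..n}" "\<Psi> (Up i) = Up k" using img_Up[OF assms(1)] by blast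
  have "lq (Lo i) (Up i)" using lq_Lo_Up assms by simp
  then have "lq (Lo i) (Up k)" using aut_lq[of "Lo i" "Up i"] assms k by simp
  then have "i = k \<or> i = Suc k" using lq_Lo_Up k assms by auto
  moreover have "i \<noteq> Suc k"
  proof
    assume a: "i = Suc k"
    then have "i \<ge> 2" "k = i - 1" using k by auto
    then have "\<Psi> (Up i) = \<Psi> (Up (i - 1))" using k assms by simp
    moreover have "Up i \<in> U" "Up (i - 1) \<in> U" using assms \<open>i \<ge> 2\<close> by auto
    ultimately show False using aut_inj[of "Up i" "Up (i - 1)"] \<open>i \<ge> 2\<close> by simp
  qed
  ultimately show ?thesis using k by simp
qed

lemma fence: "Suc m \<le> n \<Longrightarrow> \<Psi> (Lo (Suc m)) = Lo (Suc m) \<and> \<Psi> (Up (Suc m)) = Up (Suc m)"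
proof (induction m)
  case 0
  then show ?case using fence_base up_step[of 1] by simp
next
  case (Suc m)
  then have l: "\<Psi> (Lo (Suc (Suc m))) = Lo (Suc (Suc m))" using lo_step by simp
  then show ?case using up_step[of "Suc (Suc m)"] Suc by simp
qed

lemma fixL: "i \<in> {1..n} \<Longrightarrow> \<Psi> (Lo i) = Lo i"
  using fence[of "i - 1"] by (cases i) auto
lemma fixU: "i \<in> {1..n} \<Longrightarrow> \<Psi> (Up i) = Up i"
  using fence[of "i - 1"] by (cases i) auto

lemma img_Dp: assumes "Dp j \<mu> \<in> U" shows "\<exists>\<mu>'. \<Psi> (Dp j \<mu>) = Dp j \<mu>' \<and> Dp j \<mu>' \<in> U"
proof -
  obtain j' \<mu>' where e: "\<Psi> (Dp j \<mu>) = Dp j' \<mu>'" using P_D[OF assms] assms unfolding DS_def by auto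
  obtain \<theta> B where t: "\<theta> \<in> G" "B \<in> BB" "\<mu> = restr \<theta> B" "j \<in> B" using assms U_Dp by auto
  have j: "j \<in> {1..n}" using t(2,4) BB_sub by blast
  have "lq (Up j) (Dp j \<mu>)" using R_UpDp t lq_R by simp
  then have "lq (Up j) (Dp j' \<mu>')" using aut_lq[of "Up j" "Dp j \<mu>"] fixU[OF j] e j assms by simp
  then have "j' = j" using F_Up_Dp lq_def' by metis
  then show ?thesis using e aut_U[OF assms] by auto
qed

lemma Gr_image: assumes "\<theta> \<in> G" shows "\<Psi> (Gr \<theta>) = Gr (resT n \<Psi> \<circ> \<theta>)"
proof -
  obtain \<theta>' where t': "\<theta>' \<in> G" "\<Psi> (Gr \<theta>) = Gr \<theta>'" using img_Gr[OF assms] by blast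
  have "\<theta>' = resT n \<Psi> \<circ> \<theta>"
  proof
    fix j
    show "\<theta>' j = (resT n \<Psi> \<circ> \<theta>) j"
    proof (cases "j \<in> {1..n}")
      case False
      then have "\<theta> j = j" "\<theta>' j = j" using out t' assms by auto
      then show ?thesis using False unfolding resT_def by auto
    next
      case True
      obtain B where B: "B \<in> BB" "j \<in> B" using BB_cover True by blast
      define d where "d = Dp j (restr \<theta> B)"
      have dU: "d \<in> U" unfolding d_def using U_Dp_I assms B by blast
      have tj: "\<theta> j \<in> {1..n}" using inn assms True by blast
      have l1: "lq (Gr \<theta>) d" unfolding d_def using R_GrDp assms B lq_R by blast
      have l2: "lq d (Tp (\<theta> j))" unfolding d_def using R_DpTp assms B lq_R by blast
      obtain \<mu>' where m: "\<Psi> d = Dp j \<mu>'" "Dp j \<mu>' \<in> U" using img_Dp dU unfolding d_def by blast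
      have "lq (Gr \<theta>') (Dp j \<mu>')" using l1 aut_lq[of "Gr \<theta>" d] dU assms t' m by simp
      then obtain B' where B': "B' \<in> BB" "j \<in> B'" "\<mu>' = restr \<theta>' B'" using F_Gr_Dp lq_def' by metis
      have "lq (Dp j \<mu>') (Tp (resT n \<Psi> (\<theta> j)))"
        using l2 aut_lq[of d "Tp (\<theta> j)"] dU tj m img_Tp[OF tj] by simp
      then have "resT n \<Psi> (\<theta> j) = the (\<mu>' j)" using F_Dp_Tp lq_def' by metis
      then show ?thesis using B' by simp
    qed
  qed
  then show ?thesis using t' by simp
qed

lemma sigma_G: "resT n \<Psi> \<in> G"
  using Gr_image[OF idG] img_Gr[OF idG] by auto

lemma Dp_image: assumes "\<theta> \<in> G" "B \<in> BB" "j \<in> B"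
  shows "\<Psi> (Dp j (restr \<theta> B)) = Dp j (restr (resT n \<Psi> \<circ> \<theta>) B)"
proof -
  define d where "d = Dp j (restr \<theta> B)"
  have dU: "d \<in> U" unfolding d_def using U_Dp_I assms by blast
  have l1: "lq (Gr \<theta>) d" unfolding d_def using R_GrDp assms lq_R by blast
  obtain \<mu>' where m: "\<Psi> d = Dp j \<mu>'" "Dp j \<mu>' \<in> U" using img_Dp dU unfolding d_def by blast
  have "lq (Gr (resT n \<Psi> \<circ> \<theta>)) (Dp j \<mu>')" using l1 aut_lq[of "Gr \<theta>" d] dU assms m Gr_image by simp
  then obtain B' where B': "B' \<in> BB" "j \<in> B'" "\<mu>' = restr (resT n \<Psi> \<circ> \<theta>) B'" using F_Gr_Dp lq_def' by metis
  have "B' = B" using BB_disj B' assms by blast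
  then show ?thesis using m B' unfolding d_def by simp
qed

lemma Tp_image: "k \<in> {1..n} \<Longrightarrow> \<Psi> (Tp k) = Tp (resT n \<Psi> k)"
  using img_Tp by blast

lemma TS_image: "\<Psi> ` TS = TS"
proof
  show "\<Psi> ` TS \<subseteq> TS" using P_T unfolding TS_def by auto
  show "TS \<subseteq> \<Psi> ` TS"
  proof
    fix y assume y: "y \<in> TS"
    then have "y \<in> U" unfolding TS_def by auto
    then obtain z where "z \<in> U" "y = \<Psi> z" using preim by blast
    then show "y \<in> \<Psi> ` TS" using P_T y by auto
  qed
qed
end


lemma resT_out: "i \<notin> {1..n} \<Longrightarrow> resT n X i = i"
  unfolding resT_def by auto

lemma aut_determined: assumes a: "\<Psi> \<in> Aut n G BB" and b: "\<Phi> \<in> Aut n G BB" and e: "resT n \<Psi> = resT n \<Phi>"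
  shows "\<Psi> = \<Phi>"
proof
  fix x
  show "\<Psi> x = \<Phi> x"
  proof (cases "x \<in> U")
    case False then show ?thesis using aut_out[OF a] aut_out[OF b] by simp
  next
    case True
    from U_cases[OF True] show ?thesis
    proof (elim disjE)
      assume "x \<in> TS" then show ?thesis using Tp_image[OF a] Tp_image[OF b] e unfolding TS_def by auto
    next
      assume "x \<in> LS" then show ?thesis using fixL[OF a] fixL[OF b] unfolding LS_def by auto
    next
      assume "x \<in> US" then show ?thesis using fixU[OF a] fixU[OF b] unfolding US_def by auto
    next
      assume "x \<in> GS" then show ?thesis using Gr_image[OF a] Gr_image[OF b] e unfolding GS_def by auto
    next
      assume "x \<in> DS"
      then obtain j \<mu> where x: "x = Dp j \<mu>" unfolding DS_def by auto
      then obtain \<theta> B where t: "\<theta> \<in> G" "B \<in> BB" "\<mu> = restr \<theta> B" "j \<in> B" using True U_Dp by auto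
      show ?thesis using Dp_image[OF a t(1,2,4)] Dp_image[OF b t(1,2,4)] e x t(3) by simp
    qed
  qed
qed

lemma resT_comp: assumes a: "\<Psi> \<in> Aut n G BB" and b: "\<Phi> \<in> Aut n G BB"
  shows "resT n (\<Psi> \<circ> \<Phi>) = resT n \<Psi> \<circ> resT n \<Phi>"
proof
  fix i
  show "resT n (\<Psi> \<circ> \<Phi>) i = (resT n \<Psi> \<circ> resT n \<Phi>) i"
  proof (cases "i \<in> {1..n}")
    case True
    then have "\<Phi> (Tp i) = Tp (resT n \<Phi> i)" "resT n \<Phi> i \<in> {1..n}" using img_Tp[OF b] by auto
    then have "\<Psi> (\<Phi> (Tp i)) = Tp (resT n \<Psi> (resT n \<Phi> i))" using img_Tp[OF a] by auto
    then show ?thesis using True unfolding resT_def[of n "\<Psi> \<circ> \<Phi>"] by simp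
  next
    case False
    then show ?thesis using resT_out by simp
  qed
qed

definition hmap :: "(nat \<Rightarrow> nat) \<Rightarrow> Uel \<Rightarrow> Uel" where
  "hmap g x = (case x of Lo i \<Rightarrow> Lo i | Up i \<Rightarrow> Up i | Gr \<theta> \<Rightarrow> Gr (g \<circ> \<theta>)
     | Dp j \<mu> \<Rightarrow> Dp j (map_option g \<circ> \<mu>) | Tp k \<Rightarrow> Tp (g k))"

definition Psi :: "(nat \<Rightarrow> nat) \<Rightarrow> Uel \<Rightarrow> Uel" where
  "Psi g x = (if x \<in> U then hmap g x else x)"

lemma map_restr: "map_option g \<circ> restr \<theta> B = restr (g \<circ> \<theta>) B"
  unfolding restr_def restrict_map_def by auto

lemma hmap_U: assumes "g \<in> G" "x \<in> U" shows "hmap g x \<in> U"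
proof (cases x)
  case (Gr \<theta>) then show ?thesis using assms compG by (simp add: hmap_def)
next
  case (Dp j \<mu>)
  then obtain \<theta> B where t: "\<theta> \<in> G" "B \<in> BB" "\<mu> = restr \<theta> B" "j \<in> B" using assms U_Dp by auto
  then show ?thesis using Dp U_Dp_I[of "g \<circ> \<theta>" B j] compG[OF assms(1) t(1)] by (simp add: hmap_def map_restr)
next
  case (Tp k) then show ?thesis using assms inn by (simp add: hmap_def)
next
  case (Lo i) then show ?thesis using assms by (simp add: hmap_def)
next
  case (Up i) then show ?thesis using assms by (simp add: hmap_def)
qed

lemma hmap_inv: assumes "g \<in> G" shows "hmap (inv' g) (hmap g x) = x"
proof (cases x)
  case (Gr \<theta>)
  have "inv' g \<circ> (g \<circ> \<theta>) = \<theta>" using inv_o1[OF assms] by (simp add: comp_assoc[symmetric])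
  then show ?thesis using Gr by (simp add: hmap_def)
next
  case (Dp j \<mu>)
  have "map_option (inv' g) \<circ> (map_option g \<circ> \<mu>) = \<mu>"
  proof
    fix y show "(map_option (inv' g) \<circ> (map_option g \<circ> \<mu>)) y = \<mu> y"
      using inv_ap1[OF assms] by (cases "\<mu> y") auto
  qed
  then show ?thesis using Dp by (simp add: hmap_def)
next
  case (Tp k) then show ?thesis using inv_ap1[OF assms] by (simp add: hmap_def)
qed (auto simp: hmap_def)

lemma hmap_R: assumes g: "g \<in> G" and r: "(x, y) \<in> R" shows "(hmap g x, hmap g y) \<in> R"
  using r[unfolded Urel_def[of n G BB]]
proof (elim UnE CollectE exE conjE)
  fix i assume "(x, y) = (Lo i, Up i)" "i \<in> {1..n}"
  then show ?thesis by (auto simp: hmap_def R_LoUp)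
next
  fix i assume "(x, y) = (Lo (Suc i), Up i)" "i \<in> {1..<n}"
  then show ?thesis by (auto simp: hmap_def R_Lo_Up)
next
  fix j \<mu> assume a: "(x, y) = (Up j, Dp j \<mu>)" "\<mu> \<in> Mset G BB" "j \<in> dom \<mu>"
  then obtain \<theta> B where t: "\<theta> \<in> G" "B \<in> BB" "\<mu> = restr \<theta> B" "j \<in> B" unfolding Mset_iff by auto
  then show ?thesis using a R_UpDp[of "g \<circ> \<theta>" B j] compG[OF g t(1)] by (simp add: hmap_def map_restr)
next
  fix j \<mu> assume a: "(x, y) = (Dp j \<mu>, Tp (the (\<mu> j)))" "\<mu> \<in> Mset G BB" "j \<in> dom \<mu>"
  then obtain \<theta> B where t: "\<theta> \<in> G" "B \<in> BB" "\<mu> = restr \<theta> B" "j \<in> B" unfolding Mset_iff by auto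
  then show ?thesis using a R_DpTp[of "g \<circ> \<theta>" B j] compG[OF g t(1)] by (simp add: hmap_def map_restr)
next
  fix \<theta> B j assume a: "(x, y) = (Gr \<theta>, Dp j (restr \<theta> B))" "\<theta> \<in> G" "B \<in> BB" "j \<in> B"
  then show ?thesis using R_GrDp[of "g \<circ> \<theta>" B j] compG[OF g a(2)] by (simp add: hmap_def map_restr)
qed

lemma Psi_rt: assumes g: "g \<in> G" and r: "(x, y) \<in> R\<^sup>*" shows "(Psi g x, Psi g y) \<in> R\<^sup>*"
  using r
proof (induction rule: rtrancl_induct)
  case base then show ?case by simp
next
  case (step y z)
  then have "y \<in> U" "z \<in> U" using R_sub by auto
  then have "(Psi g y, Psi g z) \<in> R" using hmap_R[OF g step(2)] unfolding Psi_def by simp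
  then show ?case using step(3) by simp
qed

lemma Psi_U: "g \<in> G \<Longrightarrow> x \<in> U \<Longrightarrow> Psi g x \<in> U"
  unfolding Psi_def using hmap_U by simp

lemma Psi_lq: "g \<in> G \<Longrightarrow> lq x y \<Longrightarrow> lq (Psi g x) (Psi g y)"
  unfolding lq_def' using Psi_U Psi_rt by blast

lemma Psi_inv: assumes "g \<in> G" "x \<in> U" shows "Psi (inv' g) (Psi g x) = x"
  using assms hmap_U hmap_inv unfolding Psi_def by simp

lemma inv_inv_G: "g \<in> G \<Longrightarrow> inv' (inv' g) = g"
  using permG permutes_bij inv_inv_eq by blast

lemma Psi_aut: assumes g: "g \<in> G" shows "Psi g \<in> Aut n G BB"
proof -
  have g': "inv' g \<in> G" using invG g by blast
  have bij: "bij_betw (Psi g) U U"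
  proof (rule bij_betw_byWitness[where f' = "Psi (inv' g)"])
    show "\<forall>a\<in>U. Psi (inv' g) (Psi g a) = a" using Psi_inv g by blast
    show "\<forall>a\<in>U. Psi g (Psi (inv' g) a) = a" using Psi_inv[OF g'] inv_inv_G[OF g] by metis
    show "Psi g ` U \<subseteq> U" using Psi_U g by blast
    show "Psi (inv' g) ` U \<subseteq> U" using Psi_U g' by blast
  qed
  have ord: "\<forall>x\<in>U. \<forall>y\<in>U. lq x y \<longleftrightarrow> lq (Psi g x) (Psi g y)"
  proof (intro ballI iffI)
    fix x y assume "x \<in> U" "y \<in> U" "lq x y" then show "lq (Psi g x) (Psi g y)" using Psi_lq g by blast
  next
    fix x y assume xy: "x \<in> U" "y \<in> U" "lq (Psi g x) (Psi g y)"
    then have "lq (Psi (inv' g) (Psi g x)) (Psi (inv' g) (Psi g y))" using Psi_lq g' by blast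
    then show "lq x y" using Psi_inv g xy by simp
  qed
  have "\<forall>x. x \<notin> U \<longrightarrow> Psi g x = x" unfolding Psi_def by simp
  then show ?thesis unfolding Aut_def using bij ord by blast
qed

lemma resT_Psi: assumes g: "g \<in> G" shows "resT n (Psi g) = g"
proof
  fix i show "resT n (Psi g) i = g i"
  proof (cases "i \<in> {1..n}")
    case True then show ?thesis unfolding resT_def Psi_def by (simp add: hmap_def)
  next
    case False then show ?thesis using resT_out[OF False] out[OF g False] by simp
  qed
qed

lemma main:
  "(\<forall>\<Psi>\<in>Aut n G BB. \<Psi> ` (Tp ` {1..n}) = Tp ` {1..n})
       \<and> resT n \<in> iso (Aut_group n G BB) ((sym_group n)\<lparr>carrier := G\<rparr>)"
proof (intro conjI ballI)
  fix \<Psi> assume "\<Psi> \<in> Aut n G BB"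
  then show "\<Psi> ` (Tp ` {1..n}) = Tp ` {1..n}" using TS_image unfolding TS_def by blast
next
  have hom: "resT n \<in> hom (Aut_group n G BB) ((sym_group n)\<lparr>carrier := G\<rparr>)"
  proof (rule homI)
    fix x assume "x \<in> carrier (Aut_group n G BB)"
    then show "resT n x \<in> carrier ((sym_group n)\<lparr>carrier := G\<rparr>)"
      using sigma_G by (simp add: Aut_group_def)
  next
    fix x y assume "x \<in> carrier (Aut_group n G BB)" "y \<in> carrier (Aut_group n G BB)"
    then show "resT n (x \<otimes>\<^bsub>Aut_group n G BB\<^esub> y) = resT n x \<otimes>\<^bsub>(sym_group n)\<lparr>carrier := G\<rparr>\<^esub> resT n y"
      using resT_comp by (simp add: Aut_group_def sym_group_def)
  qed
  have bij: "bij_betw (resT n) (carrier (Aut_group n G BB)) (carrier ((sym_group n)\<lparr>carrier := G\<rparr>))"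
    unfolding bij_betw_def
  proof
    show "inj_on (resT n) (carrier (Aut_group n G BB))"
      unfolding inj_on_def Aut_group_def using aut_determined by simp
    show "resT n ` carrier (Aut_group n G BB) = carrier ((sym_group n)\<lparr>carrier := G\<rparr>)"
    proof
      show "resT n ` carrier (Aut_group n G BB) \<subseteq> carrier ((sym_group n)\<lparr>carrier := G\<rparr>)"
        using sigma_G by (auto simp: Aut_group_def)
      show "carrier ((sym_group n)\<lparr>carrier := G\<rparr>) \<subseteq> resT n ` carrier (Aut_group n G BB)"
      proof
        fix g assume "g \<in> carrier ((sym_group n)\<lparr>carrier := G\<rparr>)"
        then have g: "g \<in> G" by simp
        then have "g = resT n (Psi g)" "Psi g \<in> Aut n G BB" using resT_Psi Psi_aut by auto
        then show "g \<in> resT n ` carrier (Aut_group n G BB)" by (simp add: Aut_group_def)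
      qed
    qed
  qed
  show "resT n \<in> iso (Aut_group n G BB) ((sym_group n)\<lparr>carrier := G\<rparr>)"
    unfolding iso_def using hom bij by blast
qed
end

theorem theorem2p4:
  fixes n :: nat and G :: "(nat \<Rightarrow> nat) set" and \<B> :: "nat set set"
  assumes "n \<ge> 1"
    and "subgroup G (sym_group n)"
    and "is_block_partition n G \<B>"
  shows "(\<forall>\<Psi>\<in>Aut n G \<B>. \<Psi> ` (Tp ` {1..n}) = Tp ` {1..n})
       \<and> resT n \<in> iso (Aut_group n G \<B>) ((sym_group n)\<lparr>carrier := G\<rparr>)"
proof -
  interpret UA n G \<B> by (rule UA.intro[OF assms])
  show ?thesis by (rule main)
qed

end
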